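(* Let $\mathcal{X}$ be finite and let $V_n:\mathcal{X}^n\rightsquigarrow\mathcal{Y}_n$ ($\mathcal{Y}_n$ countable) be a channel sequence, with $\overline{p}_n$ a distribution on $\mathcal{X}^n$ attaining $\mathbf{I}(V_n)=\max_p\mathbf{I}(V_n,p)$. Let $\varphi_n=-\log_2\inf\big(\{V_n(y|x)\}_{x,y}\setminus\{0\}\big)\ge0$. For a sequence $\delta_n\in[0,1]$ define $\hat p_n(x)=(1-\delta_n)\overline{p}_n(x)+\delta_n/|\mathcal{X}|^n$. Then $\mathbf{I}(V_n)-\mathbf{I}(V_n,\hat p_n)=O(\delta_n(n+\varphi_n))$. In particular, if $\delta_n=o(1/\varphi_n)$ and $\delta_n=o(1)$, and the limit $\mathbf{I}(V)=\lim_n\mathbf{I}(V_n)/n$ exists, then $\lim_{n\to\infty}\mathbf{I}(V_n,\hat p_n)/n=\mathbf{I}(V)$; and if $\delta_n=o(1/\varphi_n)$ and $\delta_n=o(1/n)$, then $\lim_{n\to\infty}[\mathbf{I}(V_n)-\mathbf{I}(V_n,\hat p_n)]=0$.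
   Context: A channel $W:\mathcal{A}\rightsquigarrow\mathcal{B}$ is a family of probability distributions $W(\cdot|a)$ on $\mathcal{B}$. For a distribution $p$: $p\bullet W(b)=\sum_a p(a)W(b|a)$; $\mathbf{i}(W,p,a,b)=\log_2\frac{W(b|a)}{p\bullet W(b)}$ if $W(b|a)>0$ and $p\bullet W(b)>0$, else $0$; $\mathbf{I}(W,p)=\sum_{a,b}p(a)W(b|a)\mathbf{i}(W,p,a,b)$, $\mathbf{I}(W)=\max_p\mathbf{I}(W,p)$. $a_n=O(b_n)$ means $|a_n|\le Cb_n$ for some constant $C$ and all large $n$; $a_n=o(b_n)$ means $a_n/b_n\to0$. *)

theory Defs
  imports "HOL-Analysis.Analysis"
begin

definition is_channel :: "'a set \<Rightarrow> ('a \<Rightarrow> 'b \<Rightarrow> real) \<Rightarrow> bool" where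
  "is_channel A W \<longleftrightarrow> (\<forall>a\<in>A. (\<forall>b. W a b \<ge> 0) \<and> (W a has_sum 1) UNIV)"

definition dists :: "'a set \<Rightarrow> ('a \<Rightarrow> real) set" where
  "dists A = {p. (\<forall>a\<in>A. p a \<ge> 0) \<and> sum p A = 1}"

definition outdist :: "'a set \<Rightarrow> ('a \<Rightarrow> 'b \<Rightarrow> real) \<Rightarrow> ('a \<Rightarrow> real) \<Rightarrow> 'b \<Rightarrow> real" where
  "outdist A W p b = (\<Sum>a\<in>A. p a * W a b)"

definition infdens :: "'a set \<Rightarrow> ('a \<Rightarrow> 'b \<Rightarrow> real) \<Rightarrow> ('a \<Rightarrow> real) \<Rightarrow> 'a \<Rightarrow> 'b \<Rightarrow> real" where
  "infdens A W p a b =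
     (if W a b > 0 \<and> outdist A W p b > 0 then log 2 (W a b / outdist A W p b) else 0)"

definition mutinf :: "'a set \<Rightarrow> ('a \<Rightarrow> 'b \<Rightarrow> real) \<Rightarrow> ('a \<Rightarrow> real) \<Rightarrow> real" where
  "mutinf A W p = (\<Sum>\<^sub>\<infinity>(a,b)\<in>A \<times> UNIV. p a * W a b * infdens A W p a b)"

definition capacity :: "'a set \<Rightarrow> ('a \<Rightarrow> 'b \<Rightarrow> real) \<Rightarrow> real" where
  "capacity A W = (SUP p\<in>dists A. mutinf A W p)"

definition minprob :: "'a set \<Rightarrow> ('a \<Rightarrow> 'b \<Rightarrow> real) \<Rightarrow> real" where
  "minprob A W = Inf {W a b | a b. a \<in> A \<and> W a b \<noteq> 0}"

definition phi :: "'a set \<Rightarrow> ('a \<Rightarrow> 'b \<Rightarrow> real) \<Rightarrow> ereal" where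
  "phi A W = (if minprob A W > 0 then ereal (- log 2 (minprob A W)) else \<infinity>)"

text \<open>The input alphabet X^n: lists of length n over the finite type 'a.\<close>
definition seqs :: "nat \<Rightarrow> 'a list set" where
  "seqs n = {xs. length xs = n}"

end

theory Submission imports Defs begin

lemma has_sum_finsum:
  fixes f :: "'i \<Rightarrow> 'x \<Rightarrow> real"
  assumes "finite I" "\<And>i. i \<in> I \<Longrightarrow> (f i has_sum s i) B"
  shows "((\<lambda>x. \<Sum>i\<in>I. f i x) has_sum (\<Sum>i\<in>I. s i)) B"
  using assms
proof (induction I rule: finite_induct)
  case empty
  then show ?case by simp
next
  case (insert j I)
  then show ?case by (simp add: has_sum_add)
qed

lemma has_sum_prod:
  fixes f :: "'a \<Rightarrow> 'b \<Rightarrow> real"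
  assumes "finite A" "\<And>a. a \<in> A \<Longrightarrow> (f a has_sum s a) UNIV"
  shows "((\<lambda>(a,b). f a b) has_sum (\<Sum>a\<in>A. s a)) (A \<times> UNIV)"
proof -
  have eq: "A \<times> UNIV = (\<Union>a\<in>A. {a} \<times> UNIV)" by auto
  have "((\<lambda>(a,b). f a b) has_sum s a) ({a} \<times> UNIV)" if "a \<in> A" for a
  proof -
    have "{a} \<times> (UNIV::'b set) = Pair a ` UNIV" by auto
    moreover have "((\<lambda>(a,b). f a b) \<circ> Pair a) = f a" by auto
    ultimately show ?thesis using has_sum_reindex[of "Pair a" UNIV "\<lambda>(a,b). f a b" "s a"] assms(2)[OF that]
      by (simp add: inj_on_def)
  qed
  then show ?thesis unfolding eq
    by (intro sum_has_sum assms(1)) auto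
qed

lemma chan_facts:
  assumes "is_channel A W" "a \<in> A"
  shows "W a b \<ge> 0" "(W a has_sum 1) UNIV" "W a b \<le> 1"
proof -
  show "W a b \<ge> 0" "(W a has_sum 1) UNIV" using assms unfolding is_channel_def by auto
  then show "W a b \<le> 1"
    using finite_sum_le_has_sum[where f="W a" and S=1 and A=UNIV and B="{b}"] assms unfolding is_channel_def by auto
qed

lemma out_has_sum:
  assumes "finite A" "is_channel A W" "q \<in> dists A"
  shows "(outdist A W q has_sum 1) UNIV"
proof -
  have "((\<lambda>b. \<Sum>a\<in>A. q a * W a b) has_sum (\<Sum>a\<in>A. q a * 1)) UNIV"
    by (intro has_sum_finsum assms(1) has_sum_cmult_right chan_facts[OF assms(2)])
  then show ?thesis using assms(3) unfolding dists_def outdist_def[abs_def] by simp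
qed

lemma out_ge:
  assumes "finite A" "is_channel A W" "q \<in> dists A" "a \<in> A"
  shows "outdist A W q b \<ge> q a * W a b" "outdist A W q b \<ge> 0"
proof -
  have nn: "\<And>x. x \<in> A \<Longrightarrow> q x * W x b \<ge> 0"
    using assms chan_facts[OF assms(2)] unfolding dists_def by auto
  show "outdist A W q b \<ge> q a * W a b"
    unfolding outdist_def using member_le_sum[of a A "\<lambda>x. q x * W x b"] nn assms by auto
  show "outdist A W q b \<ge> 0"
    unfolding outdist_def using nn by (simp add: sum_nonneg)
qed


lemma ln_lower: "0 < (x::real) \<Longrightarrow> ln x \<ge> 1 - 1 / x"
proof -
  assume x: "0 < x"
  have "ln (1/x) \<le> 1/x - 1" using x by (intro ln_le_minus_one) simp
  moreover have "ln (1/x) = - ln x" using x by (simp add: ln_div)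
  ultimately show ?thesis by simp
qed

lemma tbound:
  fixes qa w y :: real
  assumes "0 \<le> qa" "qa \<le> 1" "0 \<le> w" "qa * w \<le> y"
  shows "\<bar>qa * w * (if w > 0 \<and> y > 0 then log 2 (w / y) else 0)\<bar> \<le> (w + y) / ln 2"
proof (cases "w > 0 \<and> y > 0")
  case True
  have o0: "y \<ge> 0" using True by simp
  have l2: "ln (2::real) > 0" by simp
  have up: "ln (w/y) \<le> w/y - 1" using True by (intro ln_le_minus_one) simp
  have lo: "ln (w/y) \<ge> 1 - y/w" using ln_lower[of "w/y"] True by simp
  have a1: "qa * w * ln (w/y) \<le> qa * w * (w/y)"
    using up assms by (intro mult_left_mono) (auto intro: mult_nonneg_nonneg)
  have a2: "qa * w * (w/y) \<le> w"
  proof -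
    have "qa * w * (w/y) = (qa * w) / y * w" by simp
    also have "\<dots> \<le> 1 * w" using assms True by (intro mult_right_mono) (auto simp: divide_le_eq)
    finally show ?thesis by simp
  qed
  have b1: "qa * w * ln (w/y) \<ge> qa * w * (- (y/w))"
    using lo assms by (intro mult_left_mono) (auto intro: mult_nonneg_nonneg)
  have b2: "qa * w * (- (y/w)) = - (qa * y)" using True by simp
  have b3: "qa * y \<le> y" using assms o0 by (simp add: mult_left_le_one_le)
  have "\<bar>qa * w * ln (w/y)\<bar> \<le> w + y"
    unfolding abs_le_iff using a1 a2 b1 b2 b3 True assms by linarith
  then have "\<bar>qa * w * ln (w/y)\<bar> / ln 2 \<le> (w + y) / ln 2"
    using l2 by (simp add: divide_right_mono)
  then show ?thesis using True by (simp add: log_def)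
next
  case False
  have "0 \<le> qa * w" using assms by simp
  then have "y \<ge> 0" using assms by linarith
  moreover have "(if w > 0 \<and> y > 0 then log 2 (w / y) else 0) = 0" using False by auto
  ultimately show ?thesis using assms by simp
qed

lemma ubound:
  fixes qa w y N :: real
  assumes "0 < qa" "0 < w" "qa * w \<le> y" "N \<ge> 1"
  shows "qa * w * log 2 (w / y) \<le> w * (qa * log 2 N + (1 / N - qa) / ln 2)"
proof -
  have y: "y > 0" using assms by (metis mult_pos_pos order_less_le_trans)
  have "w / y \<le> 1 / qa" using assms y by (simp add: divide_simps mult.commute)
  then have "log 2 (w/y) \<le> log 2 (1/qa)" using assms y by simp
  also have "log 2 (1/qa) = log 2 N + ln (1 / (qa * N)) / ln 2"
    using assms by (simp add: log_def ln_div ln_mult divide_simps)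
  finally have "qa * log 2 (w/y) \<le> qa * (log 2 N + ln (1 / (qa * N)) / ln 2)"
    using assms by simp
  also have "\<dots> \<le> qa * (log 2 N + (1 / (qa * N) - 1) / ln 2)"
    using assms by (intro mult_left_mono add_left_mono divide_right_mono ln_le_minus_one) auto
  also have "\<dots> = qa * log 2 N + (1 / N - qa) / ln 2"
    using assms by (simp add: field_simps)
  finally have "qa * log 2 (w/y) \<le> qa * log 2 N + (1 / N - qa) / ln 2" .
  then have "w * (qa * log 2 (w/y)) \<le> w * (qa * log 2 N + (1 / N - qa) / ln 2)"
    using assms by (intro mult_left_mono) auto
  then show ?thesis by (simp add: algebra_simps)
qed


lemma cbound:
  fixes pa c d w po ro :: real
  assumes "0 \<le> pa" "0 < c" "0 \<le> d" "d \<le> 1" "0 \<le> w" "pa * w \<le> po"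
    "((1-d)*pa + d*c) * w \<le> ro"
  shows "((1-d)*pa + d*c) * w * (if w > 0 \<and> ro > 0 then log 2 (w/ro) else 0)
     \<ge> (1-d) * (pa * w * (if w > 0 \<and> po > 0 then log 2 (w/po) else 0))
       + (1-d) * (pa * w - pa * w * ro / po) / ln 2 + d * c * (w - ro) / ln 2"
proof -
  have l2: "ln (2::real) > 0" by simp
  have ra: "(1-d)*pa + d*c \<ge> 0" using assms by simp
  show ?thesis
  proof (cases "w > 0")
    case False
    then have w: "w = 0" using assms by simp
    then have "ro \<ge> 0" using assms by simp
    then have "d * c * (w - ro) / ln 2 \<le> 0" using assms w l2
      by (simp add: divide_nonpos_pos mult_nonneg_nonpos)
    then show ?thesis using w by simp
  next
    case wpos: True
    have key: "c * w * ln (w/ro) \<ge> c * (w - ro)" if "ro > 0" for ro :: real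
    proof -
      have "ln (w/ro) \<ge> 1 - ro/w" using ln_lower[of "w/ro"] that wpos by simp
      then have "c * w * ln (w/ro) \<ge> c * w * (1 - ro/w)" using assms wpos
        by (intro mult_left_mono) auto
      then show ?thesis using wpos by (simp add: algebra_simps)
    qed
    show ?thesis
    proof (cases "pa > 0")
      case False
      then have pa: "pa = 0" using assms by simp
      show ?thesis
      proof (cases "d > 0")
        case False
        then show ?thesis using pa assms by simp
      next
        case True
        then have "d * c * w > 0" using assms wpos by simp
        then have ro: "ro > 0" using assms pa by simp
        have "d * (c * w * ln (w/ro)) \<ge> d * (c * (w - ro))"
          using key[OF ro] assms by (intro mult_left_mono) auto
        then have "d * (c * w * ln (w/ro)) / ln 2 \<ge> d * (c * (w - ro)) / ln 2"
          using l2 by (intro divide_right_mono) auto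
        then show ?thesis using pa ro wpos by (simp add: log_def algebra_simps)
      qed
    next
      case papos: True
      have po: "po > 0" using assms papos wpos by (metis mult_pos_pos order_less_le_trans)
      have "(1-d)*pa + d*c > 0"
      proof (cases "d < 1")
        case True then show ?thesis using papos assms by (simp add: add_pos_nonneg)
      next
        case False then show ?thesis using assms by simp
      qed
      then have ro: "ro > 0" using assms wpos by (metis mult_pos_pos order_less_le_trans)
      have split: "ln (w/ro) = ln (w/po) + ln (po/ro)" using wpos po ro by (simp add: ln_div)
      have k2: "pa * w * ln (po/ro) \<ge> pa * w - pa * w * ro / po"
      proof -
        have "ln (po/ro) \<ge> 1 - ro/po" using ln_lower[of "po/ro"] po ro by simp
        then have "pa * w * ln (po/ro) \<ge> pa * w * (1 - ro/po)" using papos wpos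
          by (intro mult_left_mono) auto
        then show ?thesis by (simp add: algebra_simps)
      qed
      have "((1-d)*pa + d*c) * w * ln (w/ro)
          = (1-d) * (pa * w * ln (w/po)) + (1-d) * (pa * w * ln (po/ro)) + d * (c * w * ln (w/ro))"
        unfolding split by (simp add: algebra_simps)
      also have "\<dots> \<ge> (1-d) * (pa * w * ln (w/po)) + (1-d) * (pa * w - pa * w * ro / po) + d * (c * (w - ro))"
        using k2 key[OF ro] assms
        by (intro add_mono mult_left_mono order_refl) auto
      finally have "((1-d)*pa + d*c) * w * ln (w/ro) / ln 2 \<ge>
          ((1-d) * (pa * w * ln (w/po)) + (1-d) * (pa * w - pa * w * ro / po) + d * (c * (w - ro))) / ln 2"
        using l2 by (intro divide_right_mono) auto
      moreover have "((1-d)*pa + d*c) * w * (if w > 0 \<and> ro > 0 then log 2 (w/ro) else 0)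
          = ((1-d)*pa + d*c) * w * ln (w/ro) / ln 2" using wpos ro by (simp add: log_def)
      moreover have "(1-d) * (pa * w * (if w > 0 \<and> po > 0 then log 2 (w/po) else 0))
       + (1-d) * (pa * w - pa * w * ro / po) / ln 2 + d * c * (w - ro) / ln 2
        = ((1-d) * (pa * w * ln (w/po)) + (1-d) * (pa * w - pa * w * ro / po) + d * (c * (w - ro))) / ln 2"
        using wpos po ro l2 by (simp add: log_def add_divide_distrib)
      ultimately show ?thesis by simp
    qed
  qed
qed


lemma dist_le1: "q \<in> dists A \<Longrightarrow> finite A \<Longrightarrow> a \<in> A \<Longrightarrow> q a \<le> 1"
  unfolding dists_def using member_le_sum[of a A q] by auto

lemma dist_ge0: "q \<in> dists A \<Longrightarrow> a \<in> A \<Longrightarrow> q a \<ge> 0"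
  unfolding dists_def by auto

lemma term_summable:
  assumes "finite A" "is_channel A W" "q \<in> dists A" "a \<in> A"
  shows "(\<lambda>b. q a * W a b * infdens A W q a b) summable_on UNIV"
proof -
  have hs: "((\<lambda>b. (W a b + outdist A W q b) / ln 2) has_sum ((1 + 1) / ln 2)) UNIV"
    using has_sum_cmult_left[OF has_sum_add[OF chan_facts(2)[OF assms(2,4)] out_has_sum[OF assms(1-3)]], of "1 / ln 2"]
    by simp
  have "(\<lambda>b. norm (q a * W a b * infdens A W q a b)) summable_on UNIV"
  proof (rule summable_on_comparison_test)
    show "(\<lambda>b. (W a b + outdist A W q b) / ln 2) summable_on UNIV" using hs by (rule has_sum_imp_summable)
    fix b
    show "norm (q a * W a b * infdens A W q a b) \<le> (W a b + outdist A W q b) / ln 2"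
      unfolding infdens_def real_norm_def
      by (rule tbound) (use dist_ge0[OF assms(3,4)] dist_le1[OF assms(3,1,4)] chan_facts(1)[OF assms(2,4)] out_ge(1)[OF assms] in auto)
  qed simp
  then show ?thesis using summable_on_iff_abs_summable_on_real by blast
qed

lemma mutinf_eq:
  assumes "finite A" "is_channel A W" "q \<in> dists A"
  shows "mutinf A W q = (\<Sum>a\<in>A. infsum (\<lambda>b. q a * W a b * infdens A W q a b) UNIV)"
proof -
  have "((\<lambda>(a,b). q a * W a b * infdens A W q a b) has_sum
          (\<Sum>a\<in>A. infsum (\<lambda>b. q a * W a b * infdens A W q a b) UNIV)) (A \<times> UNIV)"
    by (rule has_sum_prod[OF assms(1)]) (use term_summable[OF assms] in auto)
  then show ?thesis unfolding mutinf_def by (simp add: infsumI)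
qed


lemma mutinf_le:
  assumes "finite A" "A \<noteq> {}" "is_channel A W" "q \<in> dists A"
  shows "mutinf A W q \<le> log 2 (real (card A))"
proof -
  define N where "N = real (card A)"
  have N1: "N \<ge> 1" using assms unfolding N_def by (simp add: Suc_leI card_gt_0_iff)
  define K where "K a = q a * log 2 N + (1 / N - q a) / ln 2" for a
  have le: "infsum (\<lambda>b. q a * W a b * infdens A W q a b) UNIV \<le> K a" if a: "a \<in> A" for a
  proof (cases "q a = 0")
    case True
    then show ?thesis using N1 unfolding K_def by simp
  next
    case False
    then have qa: "q a > 0" using dist_ge0[OF assms(4) a] by simp
    have h1: "((\<lambda>b. q a * W a b * infdens A W q a b) has_sum
                infsum (\<lambda>b. q a * W a b * infdens A W q a b) UNIV) UNIV"
      using term_summable[OF assms(1,3,4) a] by simp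
    have h2: "((\<lambda>b. W a b * K a) has_sum (1 * K a)) UNIV"
      by (rule has_sum_cmult_left[OF chan_facts(2)[OF assms(3) a]])
    show ?thesis
    proof (rule has_sum_mono[OF h1 h2, simplified])
      fix b
      show "q a * W a b * infdens A W q a b \<le> W a b * K a"
      proof (cases "W a b > 0")
        case True
        have "q a * W a b * log 2 (W a b / outdist A W q b) \<le> W a b * K a"
          unfolding K_def
          by (rule ubound) (use qa True out_ge(1)[OF assms(1,3,4) a] N1 in auto)
        moreover have "outdist A W q b > 0"
          using out_ge(1)[OF assms(1,3,4) a, of b] qa True by (metis mult_pos_pos order_less_le_trans)
        ultimately show ?thesis using True unfolding infdens_def by simp
      next
        case False
        then have "W a b = 0" using chan_facts(1)[OF assms(3) a, of b] by simp
        then show ?thesis unfolding infdens_def by simp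
      qed
    qed
  qed
  have "mutinf A W q \<le> (\<Sum>a\<in>A. K a)"
    unfolding mutinf_eq[OF assms(1,3,4)] by (rule sum_mono) (rule le)
  also have "(\<Sum>a\<in>A. K a) = (\<Sum>a\<in>A. q a) * log 2 N + ((\<Sum>a\<in>A. 1 / N) - (\<Sum>a\<in>A. q a)) / ln 2"
    unfolding K_def by (simp add: sum.distrib sum_distrib_right sum_subtractf sum_divide_distrib[symmetric])
  also have "\<dots> = log 2 N"
    using assms(4) N1 unfolding dists_def N_def by simp
  finally show ?thesis unfolding N_def .
qed


lemma has_sum_diff':
  fixes f g :: "'x \<Rightarrow> real"
  assumes "(f has_sum a) B" "(g has_sum b) B"
  shows "((\<lambda>x. f x - g x) has_sum (a - b)) B"
  using has_sum_add[OF assms(1) has_sum_cmult_right[OF assms(2), of "-1"]] by simp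

lemma mix_dist:
  assumes "finite A" "A \<noteq> {}" "p \<in> dists A" "0 \<le> d" "d \<le> 1"
    "\<And>x. r x = (1-d) * p x + d / real (card A)"
  shows "r \<in> dists A"
proof -
  have "card A > 0" using assms by (simp add: card_gt_0_iff)
  have "sum r A = (1-d) * sum p A + real (card A) * (d / real (card A))"
    using assms(6) by (simp add: sum.distrib sum_distrib_left)
  also have "\<dots> = 1" using assms(3) \<open>card A > 0\<close> unfolding dists_def by simp
  finally show ?thesis using assms unfolding dists_def by (auto intro!: add_nonneg_nonneg)
qed

lemma concave:
  assumes fin: "finite A" and ne: "A \<noteq> {}" and ch: "is_channel A W" and p: "p \<in> dists A"
    and d: "0 \<le> d" "d \<le> 1"
    and rdef: "\<And>x. r x = (1-d) * p x + d / real (card A)"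
  shows "mutinf A W r \<ge> (1-d) * mutinf A W p"
proof -
  have r: "r \<in> dists A" by (rule mix_dist[OF fin ne p d rdef])
  define c where "c = 1 / real (card A)"
  have c: "c > 0" using fin ne unfolding c_def by (simp add: card_gt_0_iff)
  have rc: "r x = (1-d) * p x + d * c" for x using rdef[of x] unfolding c_def by simp
  define po where "po = outdist A W p"
  define ro where "ro = outdist A W r"
  define G where "G a b = p a * W a b * ro b / po b" for a b
  have po0: "po b \<ge> 0" for b unfolding po_def using out_ge(2)[OF fin ch p] ne by blast
  have ro0: "ro b \<ge> 0" for b unfolding ro_def using out_ge(2)[OF fin ch r] ne by blast
  have G0: "G a b \<ge> 0" if "a \<in> A" for a b
    unfolding G_def using dist_ge0[OF p that] chan_facts(1)[OF ch that] po0 ro0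
    by (intro divide_nonneg_nonneg mult_nonneg_nonneg) auto
  have Gle: "G a b \<le> ro b" if "a \<in> A" for a b
  proof (cases "po b = 0")
    case True then show ?thesis using ro0 unfolding G_def by simp
  next
    case False
    then have pp: "po b > 0" using po0[of b] by simp
    have "G a b = (p a * W a b / po b) * ro b" unfolding G_def by simp
    also have "\<dots> \<le> 1 * ro b"
      using out_ge(1)[OF fin ch p that, of b] pp ro0[of b] unfolding po_def[symmetric]
      by (intro mult_right_mono) auto
    finally show ?thesis by simp
  qed
  have ro_hs: "(ro has_sum 1) UNIV" unfolding ro_def by (rule out_has_sum[OF fin ch r])
  have Gsum: "G a summable_on UNIV" if "a \<in> A" for a
    by (rule summable_on_comparison_test[OF has_sum_imp_summable[OF ro_hs]]) (use Gle G0 that in auto)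
  define Gs where "Gs a = infsum (G a) UNIV" for a
  have Gs_le: "(\<Sum>a\<in>A. Gs a) \<le> 1"
  proof -
    have h: "((\<lambda>b. \<Sum>a\<in>A. G a b) has_sum (\<Sum>a\<in>A. Gs a)) UNIV"
      by (rule has_sum_finsum[OF fin]) (use Gsum in \<open>auto simp: Gs_def\<close>)
    show ?thesis
    proof (rule has_sum_mono[OF h ro_hs])
      fix b
      have "(\<Sum>a\<in>A. G a b) = po b * ro b / po b"
        unfolding G_def po_def outdist_def by (simp add: sum_divide_distrib[symmetric] sum_distrib_right)
      also have "\<dots> \<le> ro b" using ro0[of b] po0[of b] by (cases "po b = 0") auto
      finally show "(\<Sum>a\<in>A. G a b) \<le> ro b" .
    qed
  qed
  define sp where "sp a = infsum (\<lambda>b. p a * W a b * infdens A W p a b) UNIV" for a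
  define sr where "sr a = infsum (\<lambda>b. r a * W a b * infdens A W r a b) UNIV" for a
  have step: "sr a \<ge> (1-d) * sp a + ((1-d)/ln 2) * (p a - Gs a) + (d*c/ln 2) * (1 - 1)"
    if a: "a \<in> A" for a
  proof -
    have h1: "((\<lambda>b. r a * W a b * infdens A W r a b) has_sum sr a) UNIV"
      unfolding sr_def using term_summable[OF fin ch r a] by simp
    have hp: "((\<lambda>b. p a * W a b * infdens A W p a b) has_sum sp a) UNIV"
      unfolding sp_def using term_summable[OF fin ch p a] by simp
    have hW: "(W a has_sum 1) UNIV" by (rule chan_facts(2)[OF ch a])
    have hpW: "((\<lambda>b. p a * W a b) has_sum (p a * 1)) UNIV" by (rule has_sum_cmult_right[OF hW])
    have hG: "(G a has_sum Gs a) UNIV" unfolding Gs_def using Gsum[OF a] by simp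
    have h2: "((\<lambda>b. (1-d) * (p a * W a b * infdens A W p a b)
               + ((1-d)/ln 2) * (p a * W a b - G a b) + (d*c/ln 2) * (W a b - ro b)) has_sum
             ((1-d) * sp a + ((1-d)/ln 2) * (p a * 1 - Gs a) + (d*c/ln 2) * (1 - 1))) UNIV"
      by (intro has_sum_add has_sum_cmult_right has_sum_diff' hp hpW hG hW ro_hs)
    have "(1-d) * sp a + ((1-d)/ln 2) * (p a * 1 - Gs a) + (d*c/ln 2) * (1 - 1) \<le> sr a"
    proof (rule has_sum_mono[OF h2 h1])
      fix b
      have cb: "((1-d)*p a + d*c) * W a b * (if W a b > 0 \<and> ro b > 0 then log 2 (W a b/ro b) else 0)
        \<ge> (1-d) * (p a * W a b * (if W a b > 0 \<and> po b > 0 then log 2 (W a b/po b) else 0))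
         + (1-d) * (p a * W a b - p a * W a b * ro b / po b) / ln 2 + d * c * (W a b - ro b) / ln 2"
        by (rule cbound) (use dist_ge0[OF p a] c d chan_facts(1)[OF ch a, of b]
             out_ge(1)[OF fin ch p a, of b] out_ge(1)[OF fin ch r a, of b] rc[of a]
             in \<open>auto simp: po_def ro_def\<close>)
      show "(1-d) * (p a * W a b * infdens A W p a b)
               + ((1-d)/ln 2) * (p a * W a b - G a b) + (d*c/ln 2) * (W a b - ro b)
            \<le> r a * W a b * infdens A W r a b"
        using cb unfolding infdens_def G_def rc po_def[symmetric] ro_def[symmetric]
        by (simp add: field_simps)
    qed
    then show ?thesis by simp
  qed
  have "mutinf A W r = (\<Sum>a\<in>A. sr a)" unfolding sr_def by (rule mutinf_eq[OF fin ch r])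
  also have "\<dots> \<ge> (\<Sum>a\<in>A. (1-d) * sp a + ((1-d)/ln 2) * (p a - Gs a) + (d*c/ln 2) * (1 - 1))"
    by (rule sum_mono) (rule step)
  also have "(\<Sum>a\<in>A. (1-d) * sp a + ((1-d)/ln 2) * (p a - Gs a) + (d*c/ln 2) * (1 - 1))
      = (1-d) * (\<Sum>a\<in>A. sp a) + ((1-d)/ln 2) * ((\<Sum>a\<in>A. p a) - (\<Sum>a\<in>A. Gs a))"
    by (simp only: sum.distrib sum_distrib_left[symmetric] sum_subtractf) simp
  finally have "mutinf A W r \<ge> (1-d) * (\<Sum>a\<in>A. sp a) + ((1-d)/ln 2) * ((\<Sum>a\<in>A. p a) - (\<Sum>a\<in>A. Gs a))" .
  moreover have "((1-d)/ln 2) * ((\<Sum>a\<in>A. p a) - (\<Sum>a\<in>A. Gs a)) \<ge> 0"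
    using p Gs_le d unfolding dists_def by (intro mult_nonneg_nonneg) auto
  moreover have "mutinf A W p = (\<Sum>a\<in>A. sp a)" unfolding sp_def by (rule mutinf_eq[OF fin ch p])
  ultimately show ?thesis
    by (simp only:)
qed


lemma phi_nonneg:
  assumes "A \<noteq> {}" "is_channel A W"
  shows "phi A W \<ge> 0"
proof (cases "minprob A W > 0")
  case True
  obtain a where a: "a \<in> A" using assms by auto
  have hs: "(W a has_sum 1) UNIV" by (rule chan_facts(2)[OF assms(2) a])
  have "\<exists>b. W a b \<noteq> 0"
  proof (rule ccontr)
    assume "\<not> ?thesis"
    then have "W a = (\<lambda>_. 0)" by auto
    then show False using hs has_sum_unique[OF hs, of 0] by simp
  qed
  then obtain b where b: "W a b \<noteq> 0" by auto
  have "minprob A W \<le> W a b"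
    unfolding minprob_def
  proof (rule cInf_lower)
    show "W a b \<in> {W a b |a b. a \<in> A \<and> W a b \<noteq> 0}" using a b by blast
    show "bdd_below {W a b |a b. a \<in> A \<and> W a b \<noteq> 0}"
      by (rule bdd_belowI[of _ 0]) (use chan_facts(1)[OF assms(2)] in auto)
  qed
  also have "\<dots> \<le> 1" by (rule chan_facts(3)[OF assms(2) a])
  finally have "log 2 (minprob A W) \<le> 0" using True by simp
  then show ?thesis using True unfolding phi_def by simp
next
  case False
  then show ?thesis unfolding phi_def by simp
qed

lemma seqs_facts:
  shows "finite (seqs n :: ('a::finite) list set)" "seqs n \<noteq> ({} :: 'a list set)"
    "card (seqs n :: 'a list set) = CARD('a) ^ n"
proof -
  have eq: "seqs n = {xs :: 'a list. set xs \<subseteq> UNIV \<and> length xs = n}" unfolding seqs_def by simp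
  show "finite (seqs n :: ('a::finite) list set)" unfolding eq by (rule finite_lists_length_eq) simp
  show "card (seqs n :: 'a list set) = CARD('a) ^ n" unfolding eq by (rule card_lists_length_eq) simp
  have "replicate n undefined \<in> (seqs n :: 'a list set)" unfolding seqs_def by simp
  then show "seqs n \<noteq> ({} :: 'a list set)" by auto
qed

lemma gap_bound:
  assumes fin: "finite A" and ne: "A \<noteq> {}" and ch: "is_channel A W" and p: "p \<in> dists A"
    and opt: "mutinf A W p = capacity A W"
    and d: "0 \<le> d" "d \<le> 1"
    and rdef: "\<And>x. r x = (1-d) * p x + d / real (card A)"
  shows "0 \<le> capacity A W - mutinf A W r" "capacity A W - mutinf A W r \<le> d * log 2 (real (card A))"
proof -
  have r: "r \<in> dists A" by (rule mix_dist[OF fin ne p d rdef])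
  have bdd: "bdd_above ((\<lambda>q. mutinf A W q) ` dists A)"
    by (rule bdd_aboveI2[of _ _ "log 2 (real (card A))"]) (rule mutinf_le[OF fin ne ch])
  have "mutinf A W r \<le> capacity A W"
    unfolding capacity_def by (rule cSUP_upper[OF r bdd])
  then show "0 \<le> capacity A W - mutinf A W r" by simp
  have "mutinf A W r \<ge> (1-d) * mutinf A W p" by (rule concave[OF fin ne ch p d rdef])
  moreover have "mutinf A W p \<le> log 2 (real (card A))" by (rule mutinf_le[OF fin ne ch p])
  ultimately have "capacity A W - mutinf A W r \<le> d * mutinf A W p" unfolding opt[symmetric]
    by (simp add: algebra_simps)
  also have "\<dots> \<le> d * log 2 (real (card A))"
    using \<open>mutinf A W p \<le> _\<close> d by (simp add: mult_left_mono)
  finally show "capacity A W - mutinf A W r \<le> d * log 2 (real (card A))" .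
qed


theorem proposition8:
  fixes V :: "nat \<Rightarrow> ('a::finite) list \<Rightarrow> ('b::countable) \<Rightarrow> real"
    and pbar :: "nat \<Rightarrow> 'a list \<Rightarrow> real"
    and \<delta> :: "nat \<Rightarrow> real"
    and phat :: "nat \<Rightarrow> 'a list \<Rightarrow> real"
  assumes chan: "\<And>n. is_channel (seqs n) (V n)"
    and pbar_dist: "\<And>n. pbar n \<in> dists (seqs n)"
    and pbar_opt: "\<And>n. mutinf (seqs n) (V n) (pbar n) = capacity (seqs n) (V n)"
    and delta_range: "\<And>n. 0 \<le> \<delta> n \<and> \<delta> n \<le> 1"
    and phat_def: "\<And>n x. phat n x = (1 - \<delta> n) * pbar n x + \<delta> n / real (CARD('a) ^ n)"
  shows "(\<exists>C. \<forall>\<^sub>F n in sequentially.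
            ereal \<bar>capacity (seqs n) (V n) - mutinf (seqs n) (V n) (phat n)\<bar>
              \<le> ereal C * (ereal (\<delta> n) * (ereal (real n) + phi (seqs n) (V n))))
       \<and> (\<forall>L. (\<lambda>n. ereal (\<delta> n) * phi (seqs n) (V n)) \<longlonglongrightarrow> 0
              \<longrightarrow> \<delta> \<longlonglongrightarrow> 0
              \<longrightarrow> (\<lambda>n. capacity (seqs n) (V n) / real n) \<longlonglongrightarrow> L
              \<longrightarrow> (\<lambda>n. mutinf (seqs n) (V n) (phat n) / real n) \<longlonglongrightarrow> L)
       \<and> ((\<lambda>n. ereal (\<delta> n) * phi (seqs n) (V n)) \<longlonglongrightarrow> 0
              \<longrightarrow> (\<lambda>n. \<delta> n * real n) \<longlonglongrightarrow> 0
              \<longrightarrow> (\<lambda>n. capacity (seqs n) (V n) - mutinf (seqs n) (V n) (phat n)) \<longlonglongrightarrow> 0)"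
proof -
  define C where "C = log 2 (real CARD('a))"
  have C0: "C \<ge> 0" unfolding C_def by (simp add: Suc_leI)
  define D where "D n = capacity (seqs n) (V n) - mutinf (seqs n) (V n) (phat n)" for n
  have Dn: "0 \<le> D n \<and> D n \<le> C * (\<delta> n * real n)" for n
  proof -
    have cardA: "card (seqs n :: 'a list set) = CARD('a) ^ n" by (rule seqs_facts(3))
    have rdef: "\<And>x. phat n x = (1 - \<delta> n) * pbar n x + \<delta> n / real (card (seqs n :: 'a list set))"
      unfolding cardA by (rule phat_def)
    note g = gap_bound[OF seqs_facts(1,2) chan pbar_dist pbar_opt conjunct1[OF delta_range] conjunct2[OF delta_range] rdef]
    have "log 2 (real (card (seqs n :: 'a list set))) = real n * C"
      unfolding cardA C_def by (simp add: log_nat_power)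
    then show ?thesis using g unfolding D_def by (simp add: algebra_simps)
  qed
  have absD: "\<bar>D n\<bar> \<le> C * (\<delta> n * real n)" for n using Dn[of n] by simp
  have P1: "\<exists>C. \<forall>\<^sub>F n in sequentially.
            ereal \<bar>capacity (seqs n) (V n) - mutinf (seqs n) (V n) (phat n)\<bar>
              \<le> ereal C * (ereal (\<delta> n) * (ereal (real n) + phi (seqs n) (V n)))"
  proof (intro exI[of _ C] always_eventually allI)
    fix n
    have ph: "phi (seqs n) (V n) \<ge> 0" by (rule phi_nonneg[OF seqs_facts(2) chan])
    have dn: "0 \<le> \<delta> n" using delta_range by simp
    show "ereal \<bar>capacity (seqs n) (V n) - mutinf (seqs n) (V n) (phat n)\<bar>
              \<le> ereal C * (ereal (\<delta> n) * (ereal (real n) + phi (seqs n) (V n)))"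
    proof (cases "phi (seqs n) (V n)")
      case (real r)
      then have r0: "r \<ge> 0" using ph by simp
      have "\<bar>D n\<bar> \<le> C * (\<delta> n * (real n + r))"
        using absD[of n] C0 dn r0
        by (smt (verit, best) distrib_left mult_nonneg_nonneg)
      then show ?thesis using real unfolding D_def by simp
    next
      case PInf
      show ?thesis
      proof (cases "\<delta> n = 0 \<or> C = 0")
        case True
        then have "D n = 0" using absD[of n] by auto
        then show ?thesis using PInf True unfolding D_def by auto
      next
        case False
        then have "\<delta> n > 0" "C > 0" using dn C0 by auto
        then show ?thesis using PInf by simp
      qed
    next
      case MInf
      then show ?thesis using ph by simp
    qed
  qed
  have P2: "\<forall>L. (\<lambda>n. ereal (\<delta> n) * phi (seqs n) (V n)) \<longlonglongrightarrow> 0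
              \<longrightarrow> \<delta> \<longlonglongrightarrow> 0
              \<longrightarrow> (\<lambda>n. capacity (seqs n) (V n) / real n) \<longlonglongrightarrow> L
              \<longrightarrow> (\<lambda>n. mutinf (seqs n) (V n) (phat n) / real n) \<longlonglongrightarrow> L"
  proof (intro allI impI)
    fix L
    assume d0: "\<delta> \<longlonglongrightarrow> 0" and cap: "(\<lambda>n. capacity (seqs n) (V n) / real n) \<longlonglongrightarrow> L"
    have "(\<lambda>n. D n / real n) \<longlonglongrightarrow> 0"
    proof (rule Lim_null_comparison)
      show "\<forall>\<^sub>F n in sequentially. norm (D n / real n) \<le> C * \<delta> n"
      proof (intro always_eventually allI)
        fix n
        show "norm (D n / real n) \<le> C * \<delta> n"
        proof (cases "n = 0")
          case True then show ?thesis using C0 delta_range[of n] by simp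
        next
          case False
          then have "\<bar>D n\<bar> / real n \<le> C * (\<delta> n * real n) / real n"
            using absD[of n] by (intro divide_right_mono) auto
          then show ?thesis using False by simp
        qed
      qed
      show "(\<lambda>n. C * \<delta> n) \<longlonglongrightarrow> 0" using tendsto_mult_right_zero[OF d0, of C] by simp
    qed
    from tendsto_diff[OF cap this]
    show "(\<lambda>n. mutinf (seqs n) (V n) (phat n) / real n) \<longlonglongrightarrow> L"
      unfolding D_def by (simp add: diff_divide_distrib)
  qed
  have P3: "(\<lambda>n. ereal (\<delta> n) * phi (seqs n) (V n)) \<longlonglongrightarrow> 0
              \<longrightarrow> (\<lambda>n. \<delta> n * real n) \<longlonglongrightarrow> 0
              \<longrightarrow> (\<lambda>n. capacity (seqs n) (V n) - mutinf (seqs n) (V n) (phat n)) \<longlonglongrightarrow> 0"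
  proof (intro impI)
    assume dn: "(\<lambda>n. \<delta> n * real n) \<longlonglongrightarrow> 0"
    have "D \<longlonglongrightarrow> 0"
    proof (rule Lim_null_comparison)
      show "\<forall>\<^sub>F n in sequentially. norm (D n) \<le> C * (\<delta> n * real n)"
        using absD by (intro always_eventually allI) simp
      show "(\<lambda>n. C * (\<delta> n * real n)) \<longlonglongrightarrow> 0" using tendsto_mult_right_zero[OF dn, of C] by simp
    qed
    then show "(\<lambda>n. capacity (seqs n) (V n) - mutinf (seqs n) (V n) (phat n)) \<longlonglongrightarrow> 0"
      unfolding D_def .
  qed
  show ?thesis using P1 P2 P3 by blast
qed

end
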